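(* Let $\mathbb{X}$ be a uniformly smooth Banach space and $\delta>0$. Suppose $V\subset\mathbb{X}$ is a $\delta$-separated set with $\#V\geq2$ and there exist a line $L$ and a number $0\leq\alpha\leq43/1224$ such that $\mathrm{dist}(x,L)\leq\alpha\delta$ for all $x\in V$. Then for all $v_1,v_2\in V$, $$|\Pi_L(v_1)-\Pi_L(v_2)|\leq|v_1-v_2|\leq\bigl(1+\rho_{\mathbb{X}}(102\alpha)\bigr)|\Pi_L(v_1)-\Pi_L(v_2)|.$$
   Context: All Banach spaces are real; a line is a one-dimensional affine subspace. $V$ is $\delta$-separated if $|v-w|\geq\delta$ for distinct $v,w\in V$. The modulus of smoothness is $\rho_{\mathbb{X}}(t)=\sup_{|x|=1,|y|=t}\tfrac12(|x+y|+|x-y|)-1$; $\mathbb{X}$ is uniformly smooth if $\rho_{\mathbb{X}}(t)/t\to0$ as $t\to0$. In a uniformly smooth space the normalized duality mapping $J:\mathbb{X}\to\mathbb{X}^*$ (with $|J(x)|_{\mathbb{X}^*}=|x|$, $\langle J(x),x\rangle=|x|^2$) is unique. For a one-dimensional linear subspace $L$, the $J$-projection is $\Pi_L(x)=\langle J(v),x\rangle v$ with $v\in L$, $|v|=1$; for an affine line $L$ and $q\in L$, $\Pi_L(x)=q+\Pi_{L-q}(x-q)$. *)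

theory Defs
  imports "HOL-Analysis.Analysis"
begin

definition mod_smooth :: "'a::real_normed_vector itself \<Rightarrow> real \<Rightarrow> real" where
  "mod_smooth _ t = Sup {(norm (x + y) + norm (x - y)) / 2 - 1 | x y :: 'a. norm x = 1 \<and> norm y = t}"

definition uniformly_smooth :: "'a::real_normed_vector itself \<Rightarrow> bool" where
  "uniformly_smooth T \<longleftrightarrow> ((\<lambda>t. mod_smooth T t / t) \<longlongrightarrow> 0) (at_right 0)"

definition is_duality :: "('a::real_normed_vector \<Rightarrow>\<^sub>L real) \<Rightarrow> 'a \<Rightarrow> bool" where
  "is_duality f x \<longleftrightarrow> norm f = norm x \<and> blinfun_apply f x = (norm x)\<^sup>2"

text \<open>Normalized duality mapping (unique in uniformly smooth spaces).\<close>
definition duality_map :: "'a::real_normed_vector \<Rightarrow> ('a \<Rightarrow>\<^sub>L real)" where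
  "duality_map x = (SOME f. is_duality f x)"

definition line :: "'a::real_normed_vector \<Rightarrow> 'a \<Rightarrow> 'a set" where
  "line q u = range (\<lambda>s::real. q + s *\<^sub>R u)"

definition J_proj :: "'a::real_normed_vector \<Rightarrow> 'a \<Rightarrow> 'a \<Rightarrow> 'a" where
  "J_proj q u x = q + (blinfun_apply (duality_map u) (x - q)) *\<^sub>R u"

end

theory Submission
  imports Defs
begin

definition dq :: "'a::real_normed_vector \<Rightarrow> 'a \<Rightarrow> real \<Rightarrow> real" where
  "dq u h \<tau> = (norm (u + \<tau> *\<^sub>R h) - 1) / \<tau>"

definition Dp :: "'a::real_normed_vector \<Rightarrow> 'a \<Rightarrow> real" where
  "Dp u h = Inf (dq u h ` {0<..})"

lemma dq_lower:
  assumes "norm u = 1" "\<tau> > 0" shows "- norm h \<le> dq u h \<tau>"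
proof -
  have "norm u \<le> norm (u + \<tau> *\<^sub>R h) + norm (\<tau> *\<^sub>R h)"
    by (metis add_diff_cancel norm_triangle_ineq4)
  hence "1 - \<tau> * norm h \<le> norm (u + \<tau> *\<^sub>R h)" using assms by simp
  hence "- norm h * \<tau> \<le> norm (u + \<tau> *\<^sub>R h) - 1" by (simp add: algebra_simps)
  thus ?thesis unfolding dq_def using assms(2) by (simp add: pos_le_divide_eq)
qed

lemma dq_upper:
  assumes "norm u = 1" "\<tau> > 0" shows "dq u h \<tau> \<le> norm h"
proof -
  have "norm (u + \<tau> *\<^sub>R h) \<le> 1 + \<tau> * norm h"
    using norm_triangle_ineq[of u "\<tau> *\<^sub>R h"] assms by simp
  hence "norm (u + \<tau> *\<^sub>R h) - 1 \<le> norm h * \<tau>" by (simp add: algebra_simps)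
  thus ?thesis unfolding dq_def using assms(2) by (simp add: pos_divide_le_eq)
qed

lemma dq_mono:
  assumes "norm u = 1" "0 < \<sigma>" "\<sigma> \<le> \<tau>" shows "dq u h \<sigma> \<le> dq u h \<tau>"
proof -
  define c where "c = \<sigma> / \<tau>"
  have c: "0 < c" "c \<le> 1" using assms by (auto simp: c_def)
  have eq: "u + \<sigma> *\<^sub>R h = (1 - c) *\<^sub>R u + c *\<^sub>R (u + \<tau> *\<^sub>R h)"
    using assms by (simp add: c_def algebra_simps)
  have "norm (u + \<sigma> *\<^sub>R h) \<le> norm ((1 - c) *\<^sub>R u) + norm (c *\<^sub>R (u + \<tau> *\<^sub>R h))"
    unfolding eq by (rule norm_triangle_ineq)
  also have "\<dots> = (1 - c) + c * norm (u + \<tau> *\<^sub>R h)" using c assms(1) by simp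
  finally have "norm (u + \<sigma> *\<^sub>R h) - 1 \<le> c * (norm (u + \<tau> *\<^sub>R h) - 1)"
    by (simp add: algebra_simps)
  hence "(norm (u + \<sigma> *\<^sub>R h) - 1) / \<sigma> \<le> c * (norm (u + \<tau> *\<^sub>R h) - 1) / \<sigma>"
    using assms by (simp add: divide_right_mono)
  also have "\<dots> = (norm (u + \<tau> *\<^sub>R h) - 1) / \<tau>" using assms by (simp add: c_def)
  finally show ?thesis unfolding dq_def .
qed

lemma Dp_le:
  assumes "norm u = 1" "\<tau> > 0" shows "Dp u h \<le> dq u h \<tau>"
  unfolding Dp_def
proof (rule cInf_lower)
  show "dq u h \<tau> \<in> dq u h ` {0<..}" using assms by auto
  show "bdd_below (dq u h ` {0<..})"
    unfolding bdd_below_def using dq_lower[OF assms(1)] by auto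
qed

lemma Dp_ge:
  assumes "\<And>\<tau>. \<tau> > 0 \<Longrightarrow> c \<le> dq u h \<tau>" shows "c \<le> Dp u h"
  unfolding Dp_def
  by (rule cInf_greatest) (use assms in auto)

lemma Dp_bound:
  assumes "norm u = 1" shows "\<bar>Dp u h\<bar> \<le> norm h"
proof -
  have "Dp u h \<le> norm h" using Dp_le[OF assms, of 1 h] dq_upper[OF assms, of 1 h] by simp
  moreover have "- norm h \<le> Dp u h" by (rule Dp_ge) (use dq_lower[OF assms] in auto)
  ultimately show ?thesis by simp
qed

lemma Dp_self: assumes "norm u = 1" shows "Dp u u = 1"
proof -
  have "dq u u \<tau> = 1" if "\<tau> > 0" for \<tau>
  proof -
    have "u + \<tau> *\<^sub>R u = (1 + \<tau>) *\<^sub>R u" by (simp add: algebra_simps)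
    hence "norm (u + \<tau> *\<^sub>R u) = 1 + \<tau>" using assms that by simp
    thus ?thesis using that by (simp add: dq_def)
  qed
  hence "Dp u u = Inf ((\<lambda>_. 1) ` ({0<..}::real set))" unfolding Dp_def
    by (metis (no_types, lifting) greaterThan_iff image_cong)
  also have "\<dots> = 1" by (metis cINF_const greaterThan_iff gt_ex empty_iff)
  finally show ?thesis .
qed

lemma Dp_zero: assumes "norm u = 1" shows "Dp u 0 = 0"
proof -
  have "Dp u 0 = Inf ((\<lambda>_. 0) ` ({0<..}::real set))" unfolding Dp_def dq_def using assms by simp
  also have "\<dots> = 0" by (metis cINF_const greaterThan_iff gt_ex empty_iff)
  finally show ?thesis .
qed

lemma dq_sub:
  assumes "norm u = 1" "\<tau> > 0"
  shows "dq u (h + k) \<tau> \<le> dq u h (2 * \<tau>) + dq u k (2 * \<tau>)"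
proof -
  have eq: "u + \<tau> *\<^sub>R (h + k) = (1/2) *\<^sub>R (u + (2*\<tau>) *\<^sub>R h) + (1/2) *\<^sub>R (u + (2*\<tau>) *\<^sub>R k)"
    by (simp add: algebra_simps flip: scaleR_2)
  have "norm (u + \<tau> *\<^sub>R (h + k)) \<le> (1/2) * norm (u + (2*\<tau>) *\<^sub>R h) + (1/2) * norm (u + (2*\<tau>) *\<^sub>R k)"
    unfolding eq using norm_triangle_ineq[of "(1/2) *\<^sub>R (u + (2*\<tau>) *\<^sub>R h)" "(1/2) *\<^sub>R (u + (2*\<tau>) *\<^sub>R k)"]
    by simp
  hence "(norm (u + \<tau> *\<^sub>R (h + k)) - 1) / \<tau> \<le> ((1/2) * (norm (u + (2*\<tau>) *\<^sub>R h) - 1) + (1/2) * (norm (u + (2*\<tau>) *\<^sub>R k) - 1)) / \<tau>"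
    using assms by (intro divide_right_mono) (auto simp: algebra_simps)
  also have "\<dots> = dq u h (2 * \<tau>) + dq u k (2 * \<tau>)"
    unfolding dq_def using assms by (simp add: field_simps)
  finally show ?thesis unfolding dq_def .
qed

lemma Dp_subadd:
  assumes u: "norm u = 1" shows "Dp u (h + k) \<le> Dp u h + Dp u k"
proof -
  have key: "Dp u (h + k) \<le> dq u h s1 + dq u k s2" if "s1 > 0" "s2 > 0" for s1 s2
  proof -
    define \<tau> where "\<tau> = min s1 s2 / 2"
    have t: "\<tau> > 0" "2*\<tau> \<le> s1" "2*\<tau> \<le> s2" using that by (auto simp: \<tau>_def)
    have "Dp u (h + k) \<le> dq u (h + k) \<tau>" by (rule Dp_le[OF u t(1)])
    also have "\<dots> \<le> dq u h (2 * \<tau>) + dq u k (2 * \<tau>)" by (rule dq_sub[OF u t(1)])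
    also have "\<dots> \<le> dq u h s1 + dq u k s2"
      using dq_mono[OF u _ t(2), of h] dq_mono[OF u _ t(3), of k] t(1) by simp
    finally show ?thesis .
  qed
  have "Dp u (h + k) - dq u k s2 \<le> Dp u h" if "s2 > 0" for s2
    by (rule Dp_ge) (use key that in force)
  hence "Dp u (h + k) - Dp u h \<le> Dp u k"
    by (intro Dp_ge) (force simp: algebra_simps)
  thus ?thesis by simp
qed

lemma dq_scale:
  assumes "c > 0" "\<tau> > 0" shows "dq u (c *\<^sub>R h) \<tau> = c * dq u h (c * \<tau>)"
  using assms by (simp add: dq_def field_simps)

lemma Dp_scale_pos:
  assumes u: "norm u = 1" and c: "c > 0" shows "Dp u (c *\<^sub>R h) = c * Dp u h"
proof -
  have a: "c * Dp u h \<le> Dp u (c *\<^sub>R h)" if c: "c > 0" for c h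
  proof (rule Dp_ge)
    fix \<tau> :: real assume t: "\<tau> > 0"
    have "Dp u h \<le> dq u h (c * \<tau>)" using Dp_le[OF u] c t by simp
    hence "c * Dp u h \<le> c * dq u h (c * \<tau>)" using c by simp
    thus "c * Dp u h \<le> dq u (c *\<^sub>R h) \<tau>" using dq_scale[OF c t, of u h] by simp
  qed
  have "(1/c) * Dp u (c *\<^sub>R h) \<le> Dp u ((1/c) *\<^sub>R (c *\<^sub>R h))" using a[of "1/c" "c *\<^sub>R h"] c by simp
  moreover have "(1/c) *\<^sub>R (c *\<^sub>R h) = h" using c by simp
  ultimately have "(1/c) * Dp u (c *\<^sub>R h) \<le> Dp u h" by simp
  hence "Dp u (c *\<^sub>R h) \<le> c * Dp u h" using c by (simp add: field_simps)
  thus ?thesis using a[OF c, of h] by linarith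
qed

lemma mod_smooth_upper:
  fixes x y :: "'a::real_normed_vector"
  assumes "norm x = 1"
  shows "(norm (x + y) + norm (x - y)) / 2 - 1 \<le> mod_smooth TYPE('a) (norm y)"
  unfolding mod_smooth_def
proof (rule cSup_upper)
  show "(norm (x + y) + norm (x - y)) / 2 - 1 \<in> {(norm (a + b) + norm (a - b)) / 2 - 1 |a b :: 'a. norm a = 1 \<and> norm b = norm y}"
    using assms by blast
  show "bdd_above {(norm (a + b) + norm (a - b)) / 2 - 1 |a b :: 'a. norm a = 1 \<and> norm b = norm y}"
    unfolding bdd_above_def
  proof (rule exI[of _ "norm y"], intro ballI)
    fix z assume "z \<in> {(norm (a + b) + norm (a - b)) / 2 - 1 |a b :: 'a. norm a = 1 \<and> norm b = norm y}"
    then obtain a b :: 'a where ab: "norm a = 1" "norm b = norm y"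
      "z = (norm (a + b) + norm (a - b)) / 2 - 1" by blast
    have "norm (a + b) \<le> 1 + norm y" "norm (a - b) \<le> 1 + norm y"
      using norm_triangle_ineq[of a b] norm_triangle_ineq4[of a b] ab by auto
    hence "(norm (a + b) + norm (a - b)) / 2 - 1 \<le> norm y" by (simp add: field_simps)
    thus "z \<le> norm y" using ab(3) by simp
  qed
qed

lemma mod_smooth_nonneg:
  fixes u :: "'a::real_normed_vector"
  assumes "norm u = 1" "s \<ge> 0" shows "0 \<le> mod_smooth TYPE('a) s"
proof -
  have ny: "norm (s *\<^sub>R u) = s" using assms by simp
  have "(u + s *\<^sub>R u) + (u - s *\<^sub>R u) = 2 *\<^sub>R u" by (simp add: algebra_simps flip: scaleR_2)
  hence "2 = norm ((u + s *\<^sub>R u) + (u - s *\<^sub>R u))"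
    using assms by simp
  also have "\<dots> \<le> norm (u + s *\<^sub>R u) + norm (u - s *\<^sub>R u)" by (rule norm_triangle_ineq)
  finally have "0 \<le> (norm (u + s *\<^sub>R u) + norm (u - s *\<^sub>R u)) / 2 - 1" by simp
  also have "\<dots> \<le> mod_smooth TYPE('a) s" using mod_smooth_upper[OF assms(1), of "s *\<^sub>R u"] ny by simp
  finally show ?thesis .
qed


lemma Dp_odd_le:
  fixes u :: "'a::real_normed_vector"
  assumes u: "norm u = 1" and sm: "uniformly_smooth TYPE('a)"
  shows "Dp u h + Dp u (- h) \<le> 0"
proof (cases "h = 0")
  case True thus ?thesis using Dp_zero[OF u] by simp
next
  case False
  hence nh: "norm h > 0" by simp
  show ?thesis
  proof (rule field_le_epsilon)
    fix e :: real assume e: "0 < e"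
    define \<epsilon> where "\<epsilon> = e / (2 * norm h)"
    have \<epsilon>: "\<epsilon> > 0" using e nh by (simp add: \<epsilon>_def)
    have "((\<lambda>t. mod_smooth TYPE('a) t / t) \<longlongrightarrow> 0) (at_right 0)"
      using sm unfolding uniformly_smooth_def .
    from tendstoD[OF this \<epsilon>] obtain b where b: "b > 0"
      and bb: "\<And>y. 0 < y \<Longrightarrow> y < b \<Longrightarrow> dist (mod_smooth TYPE('a) y / y) 0 < \<epsilon>"
      unfolding eventually_at_right_field by auto
    define s where "s = b / 2"
    have s: "s > 0" "s < b" using b by (auto simp: s_def)
    have rs: "mod_smooth TYPE('a) s / s < \<epsilon>" using bb[OF s] unfolding dist_real_def by (metis abs_ge_self diff_zero le_less_trans)
    define \<tau> where "\<tau> = s / norm h"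
    have t: "\<tau> > 0" using s nh by (simp add: \<tau>_def)
    have nth: "norm (\<tau> *\<^sub>R h) = s" using t nh s by (simp add: \<tau>_def)
    have up: "(norm (u + \<tau> *\<^sub>R h) + norm (u - \<tau> *\<^sub>R h)) / 2 - 1 \<le> mod_smooth TYPE('a) s"
      using mod_smooth_upper[OF u, of "\<tau> *\<^sub>R h"] nth by simp
    have "Dp u h + Dp u (- h) \<le> dq u h \<tau> + dq u (- h) \<tau>"
      using Dp_le[OF u t, of h] Dp_le[OF u t, of "- h"] by simp
    also have "\<dots> = 2 * ((norm (u + \<tau> *\<^sub>R h) + norm (u - \<tau> *\<^sub>R h)) / 2 - 1) / \<tau>"
      unfolding dq_def using t by (simp add: field_simps)
    also have "\<dots> \<le> 2 * mod_smooth TYPE('a) s / \<tau>"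
      using up t by (intro divide_right_mono) (auto simp: field_simps)
    also have "\<dots> = 2 * norm h * (mod_smooth TYPE('a) s / s)"
      using s nh by (simp add: \<tau>_def field_simps)
    also have "\<dots> \<le> 2 * norm h * \<epsilon>" using rs nh by (intro mult_left_mono) auto
    also have "\<dots> = e" using nh by (simp add: \<epsilon>_def)
    finally show "Dp u h + Dp u (- h) \<le> 0 + e" by simp
  qed
qed

lemma Dp_neg:
  fixes u :: "'a::real_normed_vector"
  assumes u: "norm u = 1" and sm: "uniformly_smooth TYPE('a)"
  shows "Dp u (- h) = - Dp u h"
proof -
  have "Dp u (h + - h) \<le> Dp u h + Dp u (- h)" by (rule Dp_subadd[OF u])
  hence "0 \<le> Dp u h + Dp u (- h)" using Dp_zero[OF u] by simp
  thus ?thesis using Dp_odd_le[OF u sm, of h] by linarith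
qed

lemma Dp_linear:
  fixes u :: "'a::real_normed_vector"
  assumes u: "norm u = 1" and sm: "uniformly_smooth TYPE('a)"
  shows "bounded_linear (Dp u)"
proof (rule bounded_linear_intro[where K = 1])
  fix x y
  have "Dp u (x + y) \<le> Dp u x + Dp u y" by (rule Dp_subadd[OF u])
  moreover have "Dp u (- x + - y) \<le> Dp u (- x) + Dp u (- y)" by (rule Dp_subadd[OF u])
  hence "- Dp u (x + y) \<le> - Dp u x - Dp u y"
    using Dp_neg[OF u sm] by (metis minus_add_distrib diff_conv_add_uminus)
  ultimately show "Dp u (x + y) = Dp u x + Dp u y" by linarith
next
  fix r :: real and x
  show "Dp u (r *\<^sub>R x) = r *\<^sub>R Dp u x"
  proof (cases "r > 0")
    case True thus ?thesis using Dp_scale_pos[OF u True] by simp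
  next
    case False
    show ?thesis
    proof (cases "r = 0")
      case True thus ?thesis using Dp_zero[OF u] by simp
    next
      case False
      hence r: "- r > 0" using \<open>\<not> r > 0\<close> by simp
      have "Dp u (r *\<^sub>R x) = Dp u ((- r) *\<^sub>R (- x))" by simp
      also have "\<dots> = (- r) * Dp u (- x)" by (rule Dp_scale_pos[OF u r])
      finally have "Dp u (r *\<^sub>R x) = (- r) * Dp u (- x)" .
      thus ?thesis using Dp_neg[OF u sm, of x] by simp
    qed
  qed
next
  fix x show "norm (Dp u x) \<le> norm x * 1" using Dp_bound[OF u] by simp
qed

lemma duality_exists:
  fixes u :: "'a::real_normed_vector"
  assumes u: "norm u = 1" and sm: "uniformly_smooth TYPE('a)"
  shows "is_duality (duality_map u) u"
proof -
  define f where "f = Blinfun (Dp u)"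
  have fa: "blinfun_apply f = Dp u" unfolding f_def
    by (rule bounded_linear_Blinfun_apply[OF Dp_linear[OF u sm]])
  have "norm f \<le> 1"
    by (rule norm_blinfun_bound) (use Dp_bound[OF u] fa in auto)
  moreover have "1 \<le> norm f"
    using norm_blinfun[of f u] fa Dp_self[OF u] u by simp
  ultimately have "is_duality f u" unfolding is_duality_def using fa Dp_self[OF u] u by simp
  thus ?thesis unfolding duality_map_def by (rule someI)
qed


lemma line_close:
  assumes "infdist x (line q u) < e"
  shows "\<exists>s. norm (x - (q + s *\<^sub>R u)) < e"
proof -
  have ne: "line q u \<noteq> {}" unfolding line_def by auto
  have bd: "bdd_below ((\<lambda>a. dist x a) ` line q u)" by (rule bdd_belowI[of _ 0]) auto
  from assms have "(INF a\<in>line q u. dist x a) < e" using infdist_notempty[OF ne] by simp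
  then obtain a where "a \<in> line q u" "dist x a < e" using cINF_less_iff[OF ne bd] by auto
  thus ?thesis unfolding line_def by (auto simp: dist_norm)
qed

theorem mainTheorem14:
  fixes V :: "'a::banach set" and \<delta> \<alpha> :: real and q u :: 'a
  assumes smooth: "uniformly_smooth TYPE('a)"
    and delta_pos: "\<delta> > 0"
    and sep: "\<forall>v\<in>V. \<forall>w\<in>V. v \<noteq> w \<longrightarrow> norm (v - w) \<ge> \<delta>"
    and two: "\<exists>v\<in>V. \<exists>w\<in>V. v \<noteq> w"
    and unit: "norm u = 1"
    and alpha: "0 \<le> \<alpha>" "\<alpha> \<le> 43 / 1224"
    and close: "\<forall>x\<in>V. infdist x (line q u) \<le> \<alpha> * \<delta>"
  shows "\<forall>v1\<in>V. \<forall>v2\<in>V.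
     norm (J_proj q u v1 - J_proj q u v2) \<le> norm (v1 - v2) \<and>
     norm (v1 - v2) \<le> (1 + mod_smooth TYPE('a) (102 * \<alpha>)) * norm (J_proj q u v1 - J_proj q u v2)"
proof (intro ballI)
  fix v1 v2 assume v1: "v1 \<in> V" and v2: "v2 \<in> V"
  define f where "f = blinfun_apply (duality_map u)"
  have dual: "is_duality (duality_map u) u" by (rule duality_exists[OF unit smooth])
  have fu: "f u = 1" using dual unit unfolding is_duality_def f_def by simp
  have fb: "\<bar>f x\<bar> \<le> norm x" for x
    using norm_blinfun[of "duality_map u" x] dual unit unfolding is_duality_def f_def by simp
  have fl: "bounded_linear f" unfolding f_def by (rule blinfun.bounded_linear_right)
  interpret f: bounded_linear f by (rule fl)
  define w where "w = v1 - v2"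
  define t where "t = f w"
  have Jdiff: "J_proj q u v1 - J_proj q u v2 = t *\<^sub>R u"
    unfolding J_proj_def t_def w_def f_def[symmetric]
    by (simp add: f.diff algebra_simps)
  have nJ: "norm (J_proj q u v1 - J_proj q u v2) = \<bar>t\<bar>" using Jdiff unit by simp
  have first: "\<bar>t\<bar> \<le> norm w" unfolding t_def by (rule fb)
  define z where "z = w - t *\<^sub>R u"
  have fz: "f z = 0" unfolding z_def using fu by (simp add: f.diff f.scale t_def)
  have zb: "norm z \<le> 4 * (\<alpha> * \<delta>)"
  proof (rule field_le_epsilon)
    fix e :: real assume e: "0 < e"
    have "infdist v1 (line q u) < \<alpha> * \<delta> + e / 4" using close v1 e by force
    then obtain s1 where s1: "norm (v1 - (q + s1 *\<^sub>R u)) < \<alpha> * \<delta> + e / 4"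
      using line_close by blast
    have "infdist v2 (line q u) < \<alpha> * \<delta> + e / 4" using close v2 e by force
    then obtain s2 where s2: "norm (v2 - (q + s2 *\<^sub>R u)) < \<alpha> * \<delta> + e / 4"
      using line_close by blast
    define d where "d = w - (s1 - s2) *\<^sub>R u"
    have "d = (v1 - (q + s1 *\<^sub>R u)) - (v2 - (q + s2 *\<^sub>R u))"
      unfolding d_def w_def by (simp add: algebra_simps)
    hence nd: "norm d < 2 * (\<alpha> * \<delta> + e / 4)"
      using norm_triangle_ineq4[of "v1 - (q + s1 *\<^sub>R u)" "v2 - (q + s2 *\<^sub>R u)"] s1 s2 by simp
    have "t = (s1 - s2) + f d" unfolding t_def d_def using fu by (simp add: f.diff f.scale)
    hence fd: "f d = t - (s1 - s2)" by simp
    have "z = d - f d *\<^sub>R u" unfolding fd unfolding z_def d_def by (simp add: algebra_simps)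
    hence "norm z \<le> norm d + \<bar>f d\<bar>"
      using norm_triangle_ineq4[of d "f d *\<^sub>R u"] unit by simp
    also have "\<dots> \<le> 2 * norm d" using fb[of d] by simp
    finally show "norm z \<le> 4 * (\<alpha> * \<delta>) + e" using nd by simp
  qed
  have wz: "w = t *\<^sub>R u + z" unfolding z_def by simp
  show "norm (J_proj q u v1 - J_proj q u v2) \<le> norm (v1 - v2) \<and>
     norm (v1 - v2) \<le> (1 + mod_smooth TYPE('a) (102 * \<alpha>)) * norm (J_proj q u v1 - J_proj q u v2)"
    unfolding nJ w_def[symmetric]
  proof (intro conjI first)
    show "norm w \<le> (1 + mod_smooth TYPE('a) (102 * \<alpha>)) * \<bar>t\<bar>"
    proof (cases "v1 = v2")
      case True
      hence "w = 0" by (simp add: w_def)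
      thus ?thesis by (simp add: t_def)
    next
      case False
      hence nw: "\<delta> \<le> norm w" using sep v1 v2 by (simp add: w_def)
      have "norm w \<le> \<bar>t\<bar> + norm z" unfolding wz
        using norm_triangle_ineq[of "t *\<^sub>R u" z] unit by simp
      hence tlow: "\<delta> * (1 - 4 * \<alpha>) \<le> \<bar>t\<bar>" using nw zb by (simp add: algebra_simps)
      have tpos: "\<bar>t\<bar> > 0"
      proof -
        have "0 < \<delta> * (1 - 4 * \<alpha>)" using delta_pos alpha by simp
        thus ?thesis using tlow by linarith
      qed
      have rho0: "0 \<le> mod_smooth TYPE('a) (102 * \<alpha>)"
        by (rule mod_smooth_nonneg[OF unit]) (use alpha in simp)
      show ?thesis
      proof (cases "z = 0")
        case True
        hence "norm w = \<bar>t\<bar>" using wz unit by simp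
        thus ?thesis using rho0 tpos by (simp add: algebra_simps)
      next
        case False
        hence nz: "norm z > 0" by simp
        have apos: "\<alpha> > 0"
        proof (rule ccontr)
          assume "\<not> \<alpha> > 0" hence "\<alpha> = 0" using alpha by simp
          thus False using zb nz by simp
        qed
        define y where "y = (1 / t) *\<^sub>R z"
        have ny: "norm y = norm z / \<bar>t\<bar>" unfolding y_def by simp
        have fy: "f y = 0" unfolding y_def using fz by (simp add: f.scale)
        have w_eq: "w = t *\<^sub>R (u + y)" unfolding wz y_def using tpos by (simp add: algebra_simps)
        have "4 * (\<alpha> * \<delta>) \<le> 51 * \<alpha> * (\<delta> * (1 - 4 * \<alpha>))"
        proof -
          have "4 \<le> 51 * (1 - 4 * \<alpha>)" using alpha by simp
          hence "\<alpha> * \<delta> * 4 \<le> \<alpha> * \<delta> * (51 * (1 - 4 * \<alpha>))"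
            using apos delta_pos by (intro mult_left_mono) auto
          thus ?thesis by (simp add: algebra_simps)
        qed
        also have "\<dots> \<le> 51 * \<alpha> * \<bar>t\<bar>" using tlow apos by (intro mult_left_mono) auto
        finally have "2 * norm z \<le> 102 * \<alpha> * \<bar>t\<bar>" using zb by simp
        moreover have "norm z = \<bar>t\<bar> * norm y" using ny tpos by simp
        ultimately have "\<bar>t\<bar> * (2 * norm y) \<le> \<bar>t\<bar> * (102 * \<alpha>)" by (simp add: algebra_simps)
        hence ny2: "2 * norm y \<le> 102 * \<alpha>" using tpos by (simp add: mult_le_cancel_left_pos)
        define \<mu> where "\<mu> = norm y / (102 * \<alpha>)"
        have nyp: "norm y > 0" using ny nz tpos by simp
        have mu1: "0 < \<mu>" using nyp apos by (simp add: \<mu>_def)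
        have mu2: "\<mu> \<le> 1/2" using ny2 apos unfolding \<mu>_def by (simp add: pos_divide_le_eq)
        note mu = mu1 mu2
        define Y where "Y = (1 / \<mu>) *\<^sub>R y"
        have nY: "norm Y = 102 * \<alpha>" 
        proof -
          have "norm Y = \<bar>1 / \<mu>\<bar> * norm y" unfolding Y_def by (rule norm_scaleR)
          also have "\<dots> = norm y / \<mu>" using mu(1) by simp
          finally have "norm Y = norm y / \<mu>" .
          also have "\<dots> = 102 * \<alpha>" using nyp apos unfolding \<mu>_def by simp
          finally show ?thesis .
        qed
        have fY: "f Y = 0" unfolding Y_def using fy by (simp add: f.scale)
        define E where "E = (norm (u + Y) + norm (u - Y)) / 2 - 1"
        have E: "E \<le> mod_smooth TYPE('a) (102 * \<alpha>)"
          using mod_smooth_upper[OF unit, of Y] nY unfolding E_def by simp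
        have p1: "1 \<le> norm (u + Y)" using fb[of "u + Y"] fu fY by (simp add: f.add)
        have p2: "1 \<le> norm (u - Y)" using fb[of "u - Y"] fu fY by (simp add: f.diff)
        have E0: "0 \<le> E" "norm (u + Y) - 1 \<le> 2 * E" using p1 p2 unfolding E_def by auto
        have uy: "u + y = (1 - \<mu>) *\<^sub>R u + \<mu> *\<^sub>R (u + Y)"
          unfolding Y_def using mu by (simp add: algebra_simps)
        have "norm (u + y) \<le> norm ((1 - \<mu>) *\<^sub>R u) + norm (\<mu> *\<^sub>R (u + Y))"
          unfolding uy by (rule norm_triangle_ineq)
        also have "\<dots> = (1 - \<mu>) + \<mu> * norm (u + Y)" using mu unit by simp
        finally have "norm (u + y) - 1 \<le> \<mu> * (norm (u + Y) - 1)" by (simp add: algebra_simps)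
        also have "\<dots> \<le> \<mu> * (2 * E)" using E0 mu by (intro mult_left_mono) auto
        also have "\<dots> = (2 * \<mu>) * E" by simp
        also have "\<dots> \<le> 1 * E" using E0 mu by (intro mult_right_mono) auto
        finally have "norm (u + y) \<le> 1 + mod_smooth TYPE('a) (102 * \<alpha>)" using E by simp
        hence "\<bar>t\<bar> * norm (u + y) \<le> \<bar>t\<bar> * (1 + mod_smooth TYPE('a) (102 * \<alpha>))"
          using tpos by (intro mult_left_mono) auto
        thus ?thesis unfolding w_eq by (simp add: mult.commute)
      qed
    qed
  qed
qed

end
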